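(* Let $A$ be a real $m\times m$ matrix, $f$ in the range of $A$, and $y$ the minimal-norm solution of $Ay=f$ (so $y\perp\mathcal{N}(A)$). Fix $q\in(0,1)$, $\alpha_0>0$, $C>1$, $\varepsilon\in(0,1)$. For each $\delta\in(0,1)$ let $f_\delta\in\mathbb{R}^m$ satisfy $\|f_\delta-f\|\le\delta$ and $(1-q)\alpha_0q\|Q_{\alpha_0q}^{-1}f_\delta\|>C\delta^\varepsilon$. Define $u_0^\delta=0$, $u_{n+1}^\delta=qu_n^\delta+(1-q)T_{\alpha_0q^{n+1}}^{-1}A^*f_\delta$, and let $n_\delta$ be the smallest integer $n\ge1$ with $G_n\le C\delta^\varepsilon$. Then $$\lim_{\delta\to0}\|u_{n_\delta}^\delta-y\|=0.$$
   Context: $A^*$ is the transpose of $A$, $T:=A^*A$, $T_a:=T+aI$, $Q:=AA^*$, $Q_a:=Q+aI$ for $a>0$; $\mathcal{N}(A)=\{u:Au=0\}$; $\|\cdot\|$ is the Euclidean norm. $G_0=0$ and $G_n=qG_{n-1}+(1-q)\alpha_0q^n\|Q_{\alpha_0q^n}^{-1}f_\delta\|$ for $n\ge1$. *)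

theory Defs
  imports "HOL-Analysis.Analysis"
begin

definition Tmat :: "real^'m^'m \<Rightarrow> real^'m^'m" where
  "Tmat A = transpose A ** A"

definition Qmat :: "real^'m^'m \<Rightarrow> real^'m^'m" where
  "Qmat A = A ** transpose A"

definition Tinv :: "real^'m^'m \<Rightarrow> real \<Rightarrow> real^'m^'m" where
  "Tinv A a = matrix_inv (Tmat A + a *\<^sub>R mat 1)"

definition Qinv :: "real^'m^'m \<Rightarrow> real \<Rightarrow> real^'m^'m" where
  "Qinv A a = matrix_inv (Qmat A + a *\<^sub>R mat 1)"

definition min_norm_solution :: "real^'m^'m \<Rightarrow> real^'m \<Rightarrow> real^'m \<Rightarrow> bool" where
  "min_norm_solution A f y \<longleftrightarrow> A *v y = f \<and> (\<forall>x. A *v x = f \<longrightarrow> norm y \<le> norm x)"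

primrec Gseq :: "real^'m^'m \<Rightarrow> real \<Rightarrow> real \<Rightarrow> real^'m \<Rightarrow> nat \<Rightarrow> real" where
  "Gseq A a0 q fd 0 = 0"
| "Gseq A a0 q fd (Suc n) = q * Gseq A a0 q fd n
     + (1 - q) * a0 * q ^ Suc n * norm (Qinv A (a0 * q ^ Suc n) *v fd)"

primrec useq :: "real^'m^'m \<Rightarrow> real \<Rightarrow> real \<Rightarrow> real^'m \<Rightarrow> nat \<Rightarrow> real^'m" where
  "useq A a0 q fd 0 = 0"
| "useq A a0 q fd (Suc n) = q *\<^sub>R useq A a0 q fd n
     + (1 - q) *\<^sub>R (Tinv A (a0 * q ^ Suc n) *v (transpose A *v fd))"

definition stop_index :: "real^'m^'m \<Rightarrow> real \<Rightarrow> real \<Rightarrow> real^'m \<Rightarrow> real \<Rightarrow> real \<Rightarrow> real \<Rightarrow> nat" where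
  "stop_index A a0 q fd C \<epsilon> \<delta> = (LEAST n. 1 \<le> n \<and> Gseq A a0 q fd n \<le> C * \<delta> powr \<epsilon>)"

end

theory Submission
  imports Defs "HOL-Analysis.Analysis"
begin


lemma smat_mv: "(a *\<^sub>R mat 1) *v (x::real^'m) = a *\<^sub>R x"
  by (metis matrix_vector_mul_lid scaleR_matrix_vector_assoc)

lemma inner_tr: "inner x (transpose (B::real^'m^'m) *v z) = inner (B *v x) z"
  by (metis dot_lmul_matrix inner_commute transpose_matrix_vector)

lemma quad: "inner x ((transpose (B::real^'m^'m) ** B + a *\<^sub>R mat 1) *v x)
   = (norm (B *v x))^2 + a * (norm x)^2"
  by (simp del: transpose_matrix_vector add: matrix_vector_mult_add_rdistrib smat_mv inner_add_right
      flip: matrix_vector_mul_assoc add: inner_tr power2_norm_eq_inner)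

lemma inv_ok:
  fixes B :: "real^'m^'m" assumes "a > 0"
  shows "invertible (transpose B ** B + a *\<^sub>R mat 1)"
proof -
  have "\<forall>x. (transpose B ** B + a *\<^sub>R mat 1) *v x = 0 \<longrightarrow> x = 0"
  proof (intro allI impI)
    fix x assume h: "(transpose B ** B + a *\<^sub>R mat 1) *v x = 0"
    have "(norm (B *v x))^2 + a * (norm x)^2 = 0" using quad[of x B a] h by simp
    moreover have "(norm (B *v x))^2 \<ge> 0" by simp
    ultimately have "a * (norm x)^2 \<le> 0" by linarith
    with assms show "x = 0"
      by (metis mult_pos_pos zero_less_norm_iff not_less zero_less_power)
  qed
  then show ?thesis using invertible_left_inverse matrix_left_invertible_ker by blast
qed

lemma inv_mult:
  fixes M :: "real^'m^'m" assumes "invertible M"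
  shows "M *v (matrix_inv M *v v) = v" "matrix_inv M *v (M *v v) = v"
proof -
  have "M ** matrix_inv M = mat 1 \<and> matrix_inv M ** M = mat 1"
    using assms unfolding invertible_def matrix_inv_def by (rule someI_ex)
  then show "M *v (matrix_inv M *v v) = v" "matrix_inv M *v (M *v v) = v"
    by (simp_all add: matrix_vector_mul_assoc)
qed

lemma key_bounds:
  fixes B :: "real^'m^'m" assumes a: "a > 0"
    and h: "(transpose B ** B + a *\<^sub>R mat 1) *v w = v"
  shows "a * norm w \<le> norm v" "(norm (B *v w))^2 \<le> (norm v)^2 / (4*a)"
proof -
  have e: "inner w v = (norm (B *v w))^2 + a * (norm w)^2" using quad[of w B a] h by simp
  have c: "inner w v \<le> norm w * norm v" by (rule norm_cauchy_schwarz)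
  have n: "(norm (B *v w))^2 \<ge> 0" by simp
  have "a * (norm w)^2 \<le> norm w * norm v" using e c n by linarith
  then show "a * norm w \<le> norm v"
    by (smt (verit, best) mult_le_cancel_left norm_ge_zero power2_eq_square mult.assoc mult.commute)
  have "(norm (B *v w))^2 \<le> norm w * norm v - a * (norm w)^2" using e c by linarith
  also have "\<dots> \<le> (norm v)^2 / (4*a)"
  proof -
    have "0 \<le> (2*a*norm w - norm v)^2" by simp
    then have "4*a*(norm w * norm v - a*(norm w)^2) \<le> (norm v)^2"
      by (simp add: power2_eq_square algebra_simps)
    then show ?thesis using a by (simp add: field_simps)
  qed
  finally show "(norm (B *v w))^2 \<le> (norm v)^2 / (4*a)" .
qed


declare transpose_matrix_vector[simp del]

lemma sq_bound: assumes "a > 0" "x \<ge> 0" "v \<ge> 0" "x^2 \<le> v^2/(4*a)"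
  shows "x \<le> v / (2 * sqrt a)"
proof -
  have "(v / (2 * sqrt a))^2 = v^2/(4*a)" using assms by (simp add: power_divide power_mult_distrib)
  then show ?thesis using assms by (metis power2_le_imp_le divide_nonneg_pos mult_pos_pos real_sqrt_gt_zero zero_less_numeral less_imp_le)
qed

lemma TT_eq: "Tmat A + a *\<^sub>R mat 1 = transpose A ** A + a *\<^sub>R mat 1" by (simp add: Tmat_def)
lemma QQ_eq: "Qmat A + a *\<^sub>R mat 1 = transpose (transpose A) ** transpose A + a *\<^sub>R mat 1"
  by (simp add: Qmat_def)

lemma T_inv: "a > 0 \<Longrightarrow> invertible (Tmat A + a *\<^sub>R mat 1)"
  unfolding TT_eq by (rule inv_ok)
lemma Q_inv: "a > 0 \<Longrightarrow> invertible (Qmat (A::real^'m^'m) + a *\<^sub>R mat 1)"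
  unfolding QQ_eq by (rule inv_ok)

lemma comm_T: "(Tmat A + a *\<^sub>R mat 1) *v (transpose A *v w) = transpose A *v ((Qmat A + a *\<^sub>R mat 1) *v w)"
  by (simp add: Tmat_def Qmat_def matrix_vector_mult_add_rdistrib smat_mv matrix_vector_right_distrib
      matrix_vector_mult_scaleR flip: matrix_vector_mul_assoc)

lemma comm_Q: "(Qmat A + a *\<^sub>R mat 1) *v (A *v w) = A *v ((Tmat A + a *\<^sub>R mat 1) *v w)"
  by (simp add: Tmat_def Qmat_def matrix_vector_mult_add_rdistrib smat_mv matrix_vector_right_distrib
      matrix_vector_mult_scaleR flip: matrix_vector_mul_assoc)

lemma Tinv_AT: assumes "a > 0"
  shows "Tinv A a *v (transpose A *v v) = transpose A *v (Qinv (A::real^'m^'m) a *v v)"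
proof -
  have "transpose A *v v = (Tmat A + a *\<^sub>R mat 1) *v (transpose A *v (Qinv A a *v v))"
    unfolding comm_T Qinv_def using inv_mult(1)[OF Q_inv[OF assms, of A]] by simp
  then show ?thesis unfolding Tinv_def using inv_mult(2)[OF T_inv[OF assms, of A]] by simp
qed

lemma Qinv_A: assumes "a > 0"
  shows "Qinv A a *v (A *v v) = A *v (Tinv (A::real^'m^'m) a *v v)"
proof -
  have "A *v v = (Qmat A + a *\<^sub>R mat 1) *v (A *v (Tinv A a *v v))"
    unfolding comm_Q Tinv_def using inv_mult(1)[OF T_inv[OF assms, of A]] by simp
  then show ?thesis unfolding Qinv_def using inv_mult(2)[OF Q_inv[OF assms, of A]] by simp
qed

lemma L1: fixes A :: "real^'m^'m" assumes "a > 0"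
  shows "norm (Tinv A a *v (transpose A *v v)) \<le> norm v / (2 * sqrt a)"
proof -
  let ?w = "Qinv (A::real^'m^'m) a *v v"
  have "(Qmat A + a *\<^sub>R mat 1) *v ?w = v" unfolding Qinv_def using inv_mult(1)[OF Q_inv[OF assms, of A]] by simp
  then have "(norm (transpose A *v ?w))^2 \<le> (norm v)^2/(4*a)"
    using key_bounds(2)[OF assms, of "transpose A" ?w v] unfolding QQ_eq by simp
  then show ?thesis unfolding Tinv_AT[OF assms] using sq_bound assms by simp
qed

lemma L2: fixes A :: "real^'m^'m" assumes "a > 0" shows "a * norm (Qinv (A::real^'m^'m) a *v v) \<le> norm v"
proof -
  let ?w = "Qinv (A::real^'m^'m) a *v v"
  have "(Qmat A + a *\<^sub>R mat 1) *v ?w = v" unfolding Qinv_def using inv_mult(1)[OF Q_inv[OF assms, of A]] by simp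
  then show ?thesis using key_bounds(1)[OF assms, of "transpose A" ?w v] unfolding QQ_eq by simp
qed

lemma L3: fixes A :: "real^'m^'m" assumes "a > 0" shows "a * norm (Qinv (A::real^'m^'m) a *v (A *v x)) \<le> sqrt a * norm x / 2"
proof -
  let ?w = "Tinv (A::real^'m^'m) a *v x"
  have "(Tmat A + a *\<^sub>R mat 1) *v ?w = x" unfolding Tinv_def using inv_mult(1)[OF T_inv[OF assms, of A]] by simp
  then have "(norm (A *v ?w))^2 \<le> (norm x)^2/(4*a)"
    using key_bounds(2)[OF assms, of A ?w x] unfolding TT_eq by simp
  then have "norm (A *v ?w) \<le> norm x / (2 * sqrt a)" using sq_bound assms by simp
  then have "a * norm (A *v ?w) \<le> a * (norm x / (2 * sqrt a))" using assms by (intro mult_left_mono) auto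
  also have "\<dots> = sqrt a * norm x / 2" using assms
    by (simp add: field_simps)
  finally show ?thesis unfolding Qinv_A[OF assms] .
qed

lemma L4: fixes A :: "real^'m^'m" assumes "a > 0" "y = transpose A *v z"
  shows "norm (Tinv (A::real^'m^'m) a *v (transpose A *v (A *v y)) - y) \<le> sqrt a * norm z / 2"
proof -
  let ?M = "Tmat A + a *\<^sub>R mat 1"
  have "?M *v y = transpose A *v (A *v y) + a *\<^sub>R y"
    by (simp add: Tmat_def matrix_vector_mult_add_rdistrib smat_mv flip: matrix_vector_mul_assoc)
  then have "y = Tinv A a *v (transpose A *v (A *v y)) + a *\<^sub>R (Tinv A a *v y)"
    unfolding Tinv_def using inv_mult(2)[OF T_inv[OF assms(1), of A], of y]
    by (simp add: matrix_vector_right_distrib matrix_vector_mult_scaleR)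
  then have "Tinv A a *v (transpose A *v (A *v y)) - y = - (a *\<^sub>R (Tinv A a *v y))"
    by (metis add_diff_cancel_left' minus_diff_eq diff_add_cancel)
  then have "norm (Tinv A a *v (transpose A *v (A *v y)) - y) = a * norm (Tinv A a *v y)"
    using assms by simp
  also have "\<dots> \<le> a * (norm z / (2 * sqrt a))"
    using L1[OF assms(1), of A z] assms by (intro mult_left_mono) auto
  also have "\<dots> = sqrt a * norm z / 2" using assms
    by (simp add: field_simps)
  finally show ?thesis .
qed



lemma range_AT:
  fixes A :: "real^'m^'m"
  assumes "min_norm_solution A f y"
  shows "\<exists>z. y = transpose A *v z"
proof -
  let ?S = "range (\<lambda>v. transpose A *v v)"
  have sub: "subspace ?S" using linear_subspace_image[OF matrix_vector_mul_linear[of "transpose A"] subspace_UNIV] by (simp add: image_def)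
  have sp: "span ?S = ?S" using sub by (simp add: span_eq_iff)
  obtain p z0 where p: "p \<in> span ?S" and o: "\<And>w. w \<in> span ?S \<Longrightarrow> orthogonal z0 w" and yd: "y = p + z0"
    using orthogonal_subspace_decomp_exists[of ?S y] by blast
  have "orthogonal z0 (transpose A *v (A *v z0))" using o sp by auto
  then have "inner (A *v z0) (A *v z0) = 0" by (simp add: orthogonal_def inner_tr)
  then have Az: "A *v z0 = 0" by simp
  have Ay: "A *v y = f" using assms by (simp add: min_norm_solution_def)
  have "A *v p = f" using Ay Az yd by (simp add: matrix_vector_right_distrib)
  then have le: "norm y \<le> norm p" using assms by (simp add: min_norm_solution_def)
  have "orthogonal p z0" using o p orthogonal_commute by blast
  then have "(norm y)^2 = (norm p)^2 + (norm z0)^2" using yd norm_add_Pythagorean by blast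
  then have "(norm z0)^2 \<le> 0" using le
    by (smt (verit, best) norm_ge_zero power_mono)
  then have "z0 = 0" by simp
  with p sp yd show ?thesis by auto
qed

declare transpose_matrix_vector[simp del]

lemma sqrt_ak: "0 \<le> q \<Longrightarrow> 0 \<le> a0 \<Longrightarrow> sqrt (a0 * q ^ k) = sqrt a0 * sqrt q ^ k"
  by (simp add: real_sqrt_mult real_sqrt_power)

lemma step_ineq:
  fixes r D c :: real assumes "0 < r" "r < 1" "0 \<le> c" "2 * c \<le> D"
  shows "r^2 * (D * r^n) + (1 - r^2) * (c * r^Suc n) \<le> D * r ^ Suc n"
proof -
  have "(1 + r) * c \<le> 2 * c" using assms by (intro mult_right_mono) auto
  then have "0 \<le> (1 - r) * (D - (1 + r) * c)" using assms by (intro mult_nonneg_nonneg) auto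
  then have "r * D + (1 - r^2) * c \<le> D" by (simp add: algebra_simps power2_eq_square)
  then have "(r * D + (1 - r^2) * c) * r^Suc n \<le> D * r^Suc n" using assms by (intro mult_right_mono) auto
  moreover have "r^2 * (D * r^n) + (1 - r^2) * (c * r^Suc n) = (r * D + (1 - r^2) * c) * r^Suc n"
    by (simp add: algebra_simps power2_eq_square)
  ultimately show ?thesis by simp
qed

lemma bias:
  fixes A :: "real^'m^'m"
  assumes q: "0 < q" "q < 1" and a0: "0 < a0" and yz: "y = transpose A *v z"
  shows "norm (useq A a0 q (A *v y) n - y) \<le> (norm y + sqrt a0 * norm z) * sqrt q ^ n"
proof (induction n)
  case 0 then show ?case using a0 by simp
next
  case (Suc n)
  let ?r = "sqrt q" let ?D = "norm y + sqrt a0 * norm z" let ?c = "sqrt a0 * norm z / 2"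
  let ?a = "a0 * q ^ Suc n"
  let ?x = "Tinv A ?a *v (transpose A *v (A *v y))"
  have apos: "?a > 0" using q a0 by simp
  have xb: "norm (?x - y) \<le> ?c * ?r ^ Suc n"
    using L4[OF apos yz] unfolding sqrt_ak[of q a0 "Suc n", OF less_imp_le less_imp_le, OF q(1) a0] by (simp add: ac_simps; linarith)
  have eq: "useq A a0 q (A *v y) (Suc n) - y = q *\<^sub>R (useq A a0 q (A *v y) n - y) + (1 - q) *\<^sub>R (?x - y)"
    by (simp add: algebra_simps)
  have "norm (useq A a0 q (A *v y) (Suc n) - y) \<le> q * norm (useq A a0 q (A *v y) n - y) + (1 - q) * norm (?x - y)"
    unfolding eq using q by (intro order_trans[OF norm_triangle_ineq]) simp
  also have "\<dots> \<le> q * (?D * ?r ^ n) + (1 - q) * (?c * ?r ^ Suc n)"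
    using Suc.IH xb q by (intro add_mono mult_left_mono) auto
  also have "\<dots> \<le> ?D * ?r ^ Suc n"
    using step_ineq[of ?r ?c ?D n] q a0 by simp
  finally show ?case .
qed

lemma noise:
  fixes A :: "real^'m^'m"
  assumes q: "0 < q" "q < 1" and a0: "0 < a0"
  shows "norm (useq A a0 q g n - useq A a0 q f n) \<le> norm (g - f) / sqrt a0 / sqrt q ^ n"
proof (induction n)
  case 0 then show ?case using a0 by simp
next
  case (Suc n)
  let ?r = "sqrt q" let ?K = "norm (g - f) / sqrt a0"
  let ?a = "a0 * q ^ Suc n"
  let ?x = "Tinv A ?a *v (transpose A *v (g - f))"
  have apos: "?a > 0" using q a0 by simp
  have r: "0 < ?r" "?r < 1" using q by auto
  have xb: "norm ?x \<le> ?K / 2 / ?r ^ Suc n"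
  proof -
    have "?K / 2 / ?r ^ Suc n = norm (g - f) / (2 * (sqrt a0 * ?r ^ Suc n))"
      by (simp add: divide_divide_eq_left mult.commute mult.left_commute)
    then show ?thesis
    using L1[OF apos, of A "g - f"] unfolding sqrt_ak[of q a0 "Suc n", OF less_imp_le less_imp_le, OF q(1) a0]
    by simp
  qed
  have eq: "useq A a0 q g (Suc n) - useq A a0 q f (Suc n) = q *\<^sub>R (useq A a0 q g n - useq A a0 q f n) + (1 - q) *\<^sub>R ?x"
    by (simp add: algebra_simps matrix_vector_mult_diff_distrib)
  have "norm (useq A a0 q g (Suc n) - useq A a0 q f (Suc n)) \<le> q * norm (useq A a0 q g n - useq A a0 q f n) + (1 - q) * norm ?x"
    unfolding eq using q by (intro order_trans[OF norm_triangle_ineq]) simp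
  also have "\<dots> \<le> q * (?K / ?r ^ n) + (1 - q) * (?K / 2 / ?r ^ Suc n)"
    using Suc.IH xb q by (intro add_mono mult_left_mono) auto
  also have "\<dots> \<le> ?K / ?r ^ Suc n"
  proof -
    have K: "?K \<ge> 0" using a0 by simp
    have qq: "q = ?r^2" using q by simp
    have "?r^3 + (1 - ?r^2)/2 \<le> 1" using r
    proof -
      have "?r^3 \<le> ?r^2" using r by (intro power_decreasing) auto
      moreover have "?r^2 \<le> 1" using r by (simp add: power_le_one)
      ultimately show ?thesis by (simp add: field_simps)
    qed
    then have L: "(?r^3 + (1 - ?r^2)/2) * (?K / ?r ^ Suc n) \<le> ?K / ?r ^ Suc n"
      using K r a0 by (intro mult_left_le_one_le) (auto intro!: divide_nonneg_pos)
    have "q * (?K / ?r ^ n) = ?r^3 * (?K / ?r ^ Suc n)"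
      using r by (subst qq) (simp add: field_simps power3_eq_cube power2_eq_square)
    moreover have "(1 - q) * (?K / 2 / ?r ^ Suc n) = (1 - ?r^2)/2 * (?K / ?r ^ Suc n)"
      using r by (subst qq) simp
    ultimately have "q * (?K / ?r ^ n) + (1 - q) * (?K / 2 / ?r ^ Suc n) = (?r^3 + (1 - ?r^2)/2) * (?K / ?r ^ Suc n)"
      by (simp only: distrib_right)
    with L show ?thesis by simp
  qed
  finally show ?case .
qed

lemma Gbound:
  fixes A :: "real^'m^'m"
  assumes q: "0 < q" "q < 1" and a0: "0 < a0"
  shows "Gseq A a0 q g n \<le> norm (g - A *v y) + sqrt a0 * norm y * sqrt q ^ n"
proof (induction n)
  case 0 then show ?case using a0 by simp
next
  case (Suc n)
  let ?r = "sqrt q" let ?D = "sqrt a0 * norm y" let ?c = "sqrt a0 * norm y / 2"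
  let ?d = "norm (g - A *v y)"
  let ?a = "a0 * q ^ Suc n"
  have apos: "?a > 0" using q a0 by simp
  have t: "?a * norm (Qinv A ?a *v g) \<le> ?d + ?c * ?r ^ Suc n"
  proof -
    have "Qinv A ?a *v g = Qinv A ?a *v (g - A *v y) + Qinv A ?a *v (A *v y)"
      by (simp add: matrix_vector_mult_diff_distrib)
    then have "?a * norm (Qinv A ?a *v g) \<le> ?a * norm (Qinv A ?a *v (g - A *v y)) + ?a * norm (Qinv A ?a *v (A *v y))"
      using apos by (metis distrib_left mult_left_mono norm_triangle_ineq less_imp_le)
    also have "\<dots> \<le> ?d + ?c * ?r ^ Suc n"
      using L2[OF apos, of A "g - A *v y"] L3[OF apos, of A y]
      unfolding sqrt_ak[of q a0 "Suc n", OF less_imp_le less_imp_le, OF q(1) a0] by (simp add: ac_simps; linarith)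
    finally show ?thesis .
  qed
  have "Gseq A a0 q g (Suc n) = q * Gseq A a0 q g n + (1 - q) * (?a * norm (Qinv A ?a *v g))"
    by simp
  also have "\<dots> \<le> q * (?d + ?D * ?r ^ n) + (1 - q) * (?d + ?c * ?r ^ Suc n)"
    using Suc.IH t q by (intro add_mono mult_left_mono) auto
  also have "\<dots> = ?d + (q * (?D * ?r ^ n) + (1 - q) * (?c * ?r ^ Suc n))"
    by (simp add: algebra_simps)
  also have "\<dots> \<le> ?d + ?D * ?r ^ Suc n"
    using step_ineq[of ?r ?c ?D n] q a0 by simp
  finally show ?case .
qed


declare transpose_matrix_vector[simp del]

lemma G_cont:
  fixes A :: "real^'m^'m"
  assumes "(g \<longlongrightarrow> f) F"
  shows "((\<lambda>x. Gseq A a0 q (g x) n) \<longlongrightarrow> Gseq A a0 q f n) F"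
proof (induction n)
  case 0 then show ?case by simp
next
  case (Suc n)
  have "((\<lambda>x. Qinv A (a0 * q ^ Suc n) *v g x) \<longlongrightarrow> Qinv A (a0 * q ^ Suc n) *v f) F"
    by (rule bounded_linear.tendsto[OF matrix_vector_mul_bounded_linear assms])
  then show ?case using Suc.IH by (simp del: power_Suc) (intro tendsto_intros)
qed

lemma G_nonneg: "0 < q \<Longrightarrow> q < 1 \<Longrightarrow> 0 < a0 \<Longrightarrow> 0 \<le> Gseq A a0 q g n"
  by (induction n) auto

lemma G_pos:
  fixes A :: "real^'m^'m"
  assumes "0 < q" "q < 1" "0 < a0" "f \<noteq> 0"
  shows "0 < Gseq A a0 q f (Suc n)"
proof -
  let ?a = "a0 * q ^ Suc n"
  have apos: "?a > 0" using assms by simp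
  have "Qinv A ?a *v f \<noteq> 0"
  proof
    assume "Qinv A ?a *v f = 0"
    then have "(Qmat A + ?a *\<^sub>R mat 1) *v (Qinv A ?a *v f) = 0" by simp
    then show False using inv_mult(1)[OF Q_inv[OF apos, of A], of f] assms(4) unfolding Qinv_def by simp
  qed
  then have "0 < (1 - q) * a0 * q ^ Suc n * norm (Qinv A ?a *v f)" using assms by simp
  moreover have "0 \<le> q * Gseq A a0 q f n" using G_nonneg[of q a0 A f n] assms by simp
  ultimately show ?thesis by simp
qed


declare transpose_matrix_vector[simp del]

theorem theorem2p10:
  fixes A :: "real^'m^'m" and f y :: "real^'m" and fd :: "real \<Rightarrow> real^'m"
    and q a0 C \<epsilon> :: real
  assumes "f \<in> range (\<lambda>x. A *v x)"
    and "min_norm_solution A f y"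
    and "0 < q" "q < 1" "0 < a0" "1 < C" "0 < \<epsilon>" "\<epsilon> < 1"
    and "\<And>\<delta>. 0 < \<delta> \<Longrightarrow> \<delta> < 1 \<Longrightarrow> norm (fd \<delta> - f) \<le> \<delta>"
    and "\<And>\<delta>. 0 < \<delta> \<Longrightarrow> \<delta> < 1 \<Longrightarrow>
           (1 - q) * a0 * q * norm (Qinv A (a0 * q) *v fd \<delta>) > C * \<delta> powr \<epsilon>"
  shows "((\<lambda>\<delta>. norm (useq A a0 q (fd \<delta>) (stop_index A a0 q (fd \<delta>) C \<epsilon> \<delta>) - y))
           \<longlongrightarrow> 0) (at_right 0)"
proof -
  note q = assms(3,4) and a0 = assms(5) and C = assms(6) and eps = assms(7,8)
  note fdb = assms(9) and hyp = assms(10)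
  obtain z where yz: "y = transpose A *v z" using range_AT[OF assms(2)] by blast
  have Ay: "A *v y = f" using assms(2) by (simp add: min_norm_solution_def)
  define r where "r = sqrt q"
  have r: "0 < r" "r < 1" using q by (auto simp: r_def)
  define D where "D = norm y + sqrt a0 * norm z"
  define D' where "D' = sqrt a0 * norm y"
  have D'0: "D' \<ge> 0" using a0 by (simp add: D'_def)
  define N where "N = (\<lambda>\<delta>. stop_index A a0 q (fd \<delta>) C \<epsilon> \<delta>)"
  define K where "K = D' / (sqrt a0 * r * (C - 1))"
  have powle: "\<delta> \<le> \<delta> powr \<epsilon>" if "0 < \<delta>" "\<delta> < 1" for \<delta>
  proof -
    have "\<delta> powr 1 \<le> \<delta> powr \<epsilon>" using that eps by (intro powr_mono') auto
    then show ?thesis using that by simp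
  qed
  have fne: "f \<noteq> 0"
  proof
    assume f0: "f = 0"
    let ?d = "1/2 :: real"
    have "a0 * q * norm (Qinv A (a0 * q) *v fd ?d) \<le> norm (fd ?d)"
      using L2[of "a0 * q" A "fd ?d"] q a0 by simp
    also have "\<dots> \<le> ?d" using fdb[of ?d] f0 by simp
    finally have "(1 - q) * (a0 * q * norm (Qinv A (a0 * q) *v fd ?d)) \<le> (1 - q) * ?d"
      using q by (intro mult_left_mono) auto
    also have "\<dots> \<le> ?d" using q by simp
    also have "\<dots> \<le> ?d powr \<epsilon>" using powle[of ?d] by simp
    also have "\<dots> \<le> C * ?d powr \<epsilon>" using C by simp
    finally show False using hyp[of ?d] by (simp add: mult.assoc)
  qed
  have key: "2 \<le> N \<delta> \<and> Gseq A a0 q (fd \<delta>) (N \<delta>) \<le> C * \<delta> powr \<epsilon>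
      \<and> C * \<delta> powr \<epsilon> < \<delta> + D' * r ^ (N \<delta> - 1)" if d: "0 < \<delta>" "\<delta> < 1" for \<delta>
  proof -
    have fdb': "norm (fd \<delta> - A *v y) \<le> \<delta>" using fdb[OF d] Ay by simp
    have pe: "\<delta> powr \<epsilon> > 0" using d by simp
    have "\<delta> powr \<epsilon> < C * \<delta> powr \<epsilon>" using C pe by simp
    then have gap: "0 < C * \<delta> powr \<epsilon> - \<delta>" using powle[OF d] by linarith
    obtain n where n: "r ^ n < (C * \<delta> powr \<epsilon> - \<delta>) / (D' + 1)"
      using real_arch_pow_inv[of "(C * \<delta> powr \<epsilon> - \<delta>) / (D' + 1)" r] gap D'0 r by auto
    have "Gseq A a0 q (fd \<delta>) (Suc n) \<le> \<delta> + D' * r ^ Suc n"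
      using Gbound[OF q a0, of A "fd \<delta>" "Suc n" y] fdb' unfolding D'_def r_def by simp
    also have "\<dots> \<le> \<delta> + (D' + 1) * r ^ n"
    proof -
      have "r ^ Suc n \<le> r ^ n" using r by (simp add: power_decreasing)
      then have "D' * r ^ Suc n \<le> D' * r ^ n" using D'0 by (intro mult_left_mono) auto
      also have "\<dots> \<le> (D' + 1) * r ^ n" using r by simp
      finally show ?thesis by simp
    qed
    also have "\<dots> < C * \<delta> powr \<epsilon>"
    proof -
      have "r ^ n * (D' + 1) < C * \<delta> powr \<epsilon> - \<delta>" using n D'0 by (simp add: pos_less_divide_eq)
      then show ?thesis by (simp add: mult.commute)
    qed
    finally have ex: "1 \<le> Suc n \<and> Gseq A a0 q (fd \<delta>) (Suc n) \<le> C * \<delta> powr \<epsilon>" by simp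
    have NL: "1 \<le> N \<delta> \<and> Gseq A a0 q (fd \<delta>) (N \<delta>) \<le> C * \<delta> powr \<epsilon>"
      unfolding N_def stop_index_def by (rule LeastI[of _ "Suc n"]) (rule ex)
    have G1: "Gseq A a0 q (fd \<delta>) 1 > C * \<delta> powr \<epsilon>" using hyp[OF d] by simp
    have N2: "2 \<le> N \<delta>"
    proof (rule ccontr)
      assume "\<not> 2 \<le> N \<delta>"
      then have "N \<delta> = 1" using NL by simp
      then show False using NL G1 by simp
    qed
    have "\<not> Gseq A a0 q (fd \<delta>) (N \<delta> - 1) \<le> C * \<delta> powr \<epsilon>"
    proof
      assume h: "Gseq A a0 q (fd \<delta>) (N \<delta> - 1) \<le> C * \<delta> powr \<epsilon>"
      have LL: "N \<delta> \<le> m" if "1 \<le> m" "Gseq A a0 q (fd \<delta>) m \<le> C * \<delta> powr \<epsilon>" for m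
        unfolding N_def stop_index_def by (rule Least_le) (use that in simp)
      have "N \<delta> \<le> N \<delta> - 1" using LL[of "N \<delta> - 1"] h N2 by simp
      then show False using N2 by simp
    qed
    then have "C * \<delta> powr \<epsilon> < Gseq A a0 q (fd \<delta>) (N \<delta> - 1)" by simp
    also have "\<dots> \<le> \<delta> + D' * r ^ (N \<delta> - 1)"
      using Gbound[OF q a0, of A "fd \<delta>" "N \<delta> - 1" y] fdb' unfolding D'_def r_def by simp
    finally show ?thesis using N2 NL by simp
  qed
  have err: "norm (useq A a0 q (fd \<delta>) (N \<delta>) - y) \<le> D * r ^ N \<delta> + K * \<delta> powr (1 - \<epsilon>)"
    if d: "0 < \<delta>" "\<delta> < 1" for \<delta>
  proof -
    obtain M where M: "N \<delta> = Suc M" using key[OF d] by (cases "N \<delta>") auto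
    have kk: "C * \<delta> powr \<epsilon> < \<delta> + D' * r ^ M" using key[OF d] M by simp
    have pe: "\<delta> powr \<epsilon> > 0" using d by simp
    let ?P = "r ^ M" let ?e = "\<delta> powr \<epsilon>"
    have P: "?P > 0" using r by simp
    have ce: "(C - 1) * ?e < D' * ?P" using kk powle[OF d] by (simp add: algebra_simps)
    have "norm (useq A a0 q (fd \<delta>) (N \<delta>) - y) \<le> norm (useq A a0 q (fd \<delta>) (N \<delta>) - useq A a0 q f (N \<delta>))
        + norm (useq A a0 q f (N \<delta>) - y)"
      by (rule order_trans[OF _ norm_triangle_ineq]) simp
    also have "\<dots> \<le> norm (fd \<delta> - f) / sqrt a0 / r ^ N \<delta> + D * r ^ N \<delta>"
      using noise[OF q a0, of A "fd \<delta>" "N \<delta>" f] bias[OF q a0 yz, of "N \<delta>"] Ay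
      unfolding D_def r_def by (intro add_mono) auto
    also have "norm (fd \<delta> - f) / sqrt a0 / r ^ N \<delta> \<le> \<delta> / sqrt a0 / r ^ N \<delta>"
      using fdb[OF d] a0 r by (simp add: divide_right_mono)
    also have "\<delta> / sqrt a0 / r ^ N \<delta> \<le> K * \<delta> powr (1 - \<epsilon>)"
    proof -
      have X: "(C - 1) * ?e > 0" using C pe by simp
      have "(C - 1) * ?e / ?P \<le> D'" using ce P by (simp add: pos_divide_le_eq)
      then have "1 / ?P * ((C - 1) * ?e) \<le> D'" by simp
      then have inv: "1 / ?P \<le> D' / ((C - 1) * ?e)" using X by (simp add: pos_le_divide_eq)
      have "\<delta> / sqrt a0 / r ^ N \<delta> = (\<delta> / (sqrt a0 * r)) * (1 / ?P)"
        using M by simp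
      also have "\<dots> \<le> (\<delta> / (sqrt a0 * r)) * (D' / ((C - 1) * ?e))"
        using inv d a0 r by (intro mult_left_mono) auto
      also have "\<dots> = K * (\<delta> / ?e)" unfolding K_def by (simp add: ac_simps)
      also have "\<delta> / ?e = \<delta> powr (1 - \<epsilon>)" using d by (simp add: powr_diff)
      finally show ?thesis .
    qed
    finally show ?thesis by simp
  qed
  have ev01: "eventually (\<lambda>\<delta>. 0 < \<delta> \<and> \<delta> < 1) (at_right (0::real))"
    unfolding eventually_at_right_field by (rule exI[of _ 1]) auto
  have fdlim: "(fd \<longlongrightarrow> f) (at_right 0)"
  proof -
    have "((\<lambda>\<delta>. fd \<delta> - f) \<longlongrightarrow> 0) (at_right 0)"
    proof (rule Lim_null_comparison)
      show "eventually (\<lambda>\<delta>. norm (fd \<delta> - f) \<le> \<delta>) (at_right 0)"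
        using ev01 by eventually_elim (use fdb in auto)
      show "((\<lambda>\<delta>::real. \<delta>) \<longlongrightarrow> 0) (at_right 0)" by (rule tendsto_ident_at)
    qed
    then show ?thesis by (simp add: LIM_zero_iff)
  qed
  have pwlim: "((\<lambda>\<delta>::real. \<delta> powr p) \<longlongrightarrow> 0) (at_right 0)" if "p > 0" for p
    by (rule tendsto_zero_powrI[OF tendsto_ident_at tendsto_const]) (use ev01 that in \<open>auto elim: eventually_mono\<close>)
  have Nlim: "filterlim N at_top (at_right 0)"
    unfolding filterlim_at_top
  proof
    fix Z
    have "\<forall>k\<in>{1..Z}. eventually (\<lambda>\<delta>. C * \<delta> powr \<epsilon> < Gseq A a0 q (fd \<delta>) k) (at_right 0)"
    proof
      fix k assume k: "k \<in> {1..Z}"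
      then obtain j where j: "k = Suc j" by (cases k) auto
      have "((\<lambda>\<delta>. Gseq A a0 q (fd \<delta>) k - C * \<delta> powr \<epsilon>) \<longlongrightarrow> Gseq A a0 q f k - C * 0) (at_right 0)"
        by (intro tendsto_intros G_cont fdlim pwlim eps)
      moreover have "0 < Gseq A a0 q f k - C * 0" using G_pos[OF q a0 fne] j by simp
      ultimately have "eventually (\<lambda>\<delta>. 0 < Gseq A a0 q (fd \<delta>) k - C * \<delta> powr \<epsilon>) (at_right 0)"
        by (rule order_tendstoD(1))
      then show "eventually (\<lambda>\<delta>. C * \<delta> powr \<epsilon> < Gseq A a0 q (fd \<delta>) k) (at_right 0)"
        by eventually_elim simp
    qed
    then have "eventually (\<lambda>\<delta>. \<forall>k\<in>{1..Z}. C * \<delta> powr \<epsilon> < Gseq A a0 q (fd \<delta>) k) (at_right 0)"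
      by (rule eventually_ball_finite[rotated]) simp
    then show "eventually (\<lambda>\<delta>. Z \<le> N \<delta>) (at_right 0)"
      using ev01
    proof eventually_elim
      case (elim \<delta>)
      have kk: "2 \<le> N \<delta>" "Gseq A a0 q (fd \<delta>) (N \<delta>) \<le> C * \<delta> powr \<epsilon>" using key[of \<delta>] elim by auto
      have "N \<delta> \<notin> {1..Z}"
      proof
        assume "N \<delta> \<in> {1..Z}"
        then have "C * \<delta> powr \<epsilon> < Gseq A a0 q (fd \<delta>) (N \<delta>)" using elim by blast
        then show False using kk by simp
      qed
      then show ?case using key[of \<delta>] elim by auto
    qed
  qed
  have blim: "((\<lambda>\<delta>. D * r ^ N \<delta> + K * \<delta> powr (1 - \<epsilon>)) \<longlongrightarrow> 0) (at_right 0)"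
  proof -
    have "((\<lambda>\<delta>. r ^ N \<delta>) \<longlongrightarrow> 0) (at_right 0)"
      using filterlim_compose[OF LIMSEQ_power_zero[of r] Nlim] r by simp
    then have "((\<lambda>\<delta>. D * r ^ N \<delta> + K * \<delta> powr (1 - \<epsilon>)) \<longlongrightarrow> D * 0 + K * 0) (at_right 0)"
      using pwlim[of "1 - \<epsilon>"] eps by (intro tendsto_intros) auto
    then show ?thesis by simp
  qed
  show ?thesis
  proof -
    have Nd: "\<And>\<delta>. stop_index A a0 q (fd \<delta>) C \<epsilon> \<delta> = N \<delta>" by (simp add: N_def)
    show ?thesis unfolding Nd
  proof (rule tendsto_sandwich[OF _ _ tendsto_const blim])
    show "eventually (\<lambda>\<delta>. 0 \<le> norm (useq A a0 q (fd \<delta>) (N \<delta>) - y)) (at_right 0)" by simp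
    show "eventually (\<lambda>\<delta>. norm (useq A a0 q (fd \<delta>) (N \<delta>) - y) \<le> D * r ^ N \<delta> + K * \<delta> powr (1 - \<epsilon>)) (at_right 0)"
      using ev01 by eventually_elim (use err in auto)
  qed
  qed
qed


end
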